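(* If a Hermitian manifold $(M^n,g)$ is Kähler-like, then its torsion $1$-form $\eta$ is holomorphic (i.e. $\overline\partial\eta=0$). Conversely, if $n=2$ and $\eta$ is holomorphic, then $g$ is Kähler-like.
   Context: $(M^n,g)$ is a Hermitian manifold; $\langle\cdot,\cdot\rangle$ is $g$ extended complex-bilinearly. $\nabla^h$ is the Chern connection (unique connection with $\nabla^hg=0$, $\nabla^hJ=0$ and torsion with vanishing $(1,1)$-part), $R^h(X,Y)Z=\nabla^h_X\nabla^h_YZ-\nabla^h_Y\nabla^h_XZ-\nabla^h_{[X,Y]}Z$, $R^h_{XYZW}=\langle R^h(X,Y)Z,W\rangle$ extended complex-multilinearly. For a local unitary frame $e={}^t(e_1,\dots,e_n)$ of $T^{1,0}M$ ($\langle e_i,\overline{e_j}\rangle=\delta_{ij}$) with dual coframe $\varphi$, write $\nabla^he=\theta e$, define $\tau$ by $d\varphi=-{}^t\theta\wedge\varphi+\tau$ and $\tau_i=\sum_{j,k}T^i_{jk}\varphi_j\wedge\varphi_k$ with $T^i_{jk}=-T^i_{kj}$. The torsion $1$-form is $\eta=\sum_{i,j}T^i_{ij}\varphi_j$ (a globally defined $(1,0)$-form). The metric $g$ is called Kähler-like if $R^h_{X\overline YZ\overline W}=R^h_{Z\overline YX\overline W}$ for all type $(1,0)$ tangent vectors $X,Y,Z,W$. *)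

theory Defs
  imports "HOL-Analysis.Analysis"
begin

text \<open>Local (coordinate chart) model of a Hermitian manifold: an open set U of
  complex^'n with holomorphic coordinates z_i = x_i + i y_i, and the metric given by
  the matrix G p i j = g(d/dz_i, d/dzbar_j) at p.\<close>

definition dirderiv :: "complex^'n \<Rightarrow> (complex^'n \<Rightarrow> complex) \<Rightarrow> complex^'n \<Rightarrow> complex" where
  "dirderiv v f p = vector_derivative (\<lambda>t::real. f (p + t *\<^sub>R v)) (at 0)"

definition coord_dirs :: "(complex^'n) set" where
  "coord_dirs = {axis i 1 | i. True} \<union> {axis i \<i> | i. True}"

fun iter_dir :: "(complex^'n) list \<Rightarrow> (complex^'n \<Rightarrow> complex) \<Rightarrow> complex^'n \<Rightarrow> complex" where
  "iter_dir [] f = f"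
| "iter_dir (v # vs) f = dirderiv v (iter_dir vs f)"

definition smooth_on :: "(complex^'n) set \<Rightarrow> (complex^'n \<Rightarrow> complex) \<Rightarrow> bool" where
  "smooth_on U f \<longleftrightarrow>
     (\<forall>vs. set vs \<subseteq> coord_dirs \<longrightarrow>
        continuous_on U (iter_dir vs f) \<and>
        (\<forall>v\<in>coord_dirs. \<forall>p\<in>U.
           ((\<lambda>t::real. iter_dir vs f (p + t *\<^sub>R v)) has_vector_derivative iter_dir (v # vs) f p) (at 0)))"

definition wirt :: "'n \<Rightarrow> (complex^'n \<Rightarrow> complex) \<Rightarrow> complex^'n \<Rightarrow> complex" where
  "wirt i f p = (dirderiv (axis i 1) f p - \<i> * dirderiv (axis i \<i>) f p) / 2"

definition wirtbar :: "'n \<Rightarrow> (complex^'n \<Rightarrow> complex) \<Rightarrow> complex^'n \<Rightarrow> complex" where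
  "wirtbar i f p = (dirderiv (axis i 1) f p + \<i> * dirderiv (axis i \<i>) f p) / 2"

definition hermitian_metric :: "(complex^'n) set \<Rightarrow> (complex^'n \<Rightarrow> 'n \<Rightarrow> 'n \<Rightarrow> complex) \<Rightarrow> bool" where
  "hermitian_metric U G \<longleftrightarrow>
     (\<forall>i j. smooth_on U (\<lambda>p. G p i j)) \<and>
     (\<forall>p\<in>U. \<forall>i j. G p j i = cnj (G p i j)) \<and>
     (\<forall>p\<in>U. \<forall>\<xi>::complex^'n. \<xi> \<noteq> 0 \<longrightarrow>
        Re (\<Sum>i\<in>UNIV. \<Sum>j\<in>UNIV. G p i j * \<xi> $ i * cnj (\<xi> $ j)) > 0)"

text \<open>Inverse metric: Ginv G p l k = h^{bar l k}, i.e. sum_l G p j l * Ginv G p l k = delta_jk.\<close>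
definition Ginv :: "(complex^'n \<Rightarrow> 'n \<Rightarrow> 'n \<Rightarrow> complex) \<Rightarrow> complex^'n \<Rightarrow> 'n \<Rightarrow> 'n \<Rightarrow> complex" where
  "Ginv G p l k = (matrix_inv (\<chi> a b. G p a b)) $ l $ k"

text \<open>Chern connection Christoffel symbols: nabla_{d_i} d_j = sum_k chern_gamma G p i j k * d_k.\<close>
definition chern_gamma :: "(complex^'n \<Rightarrow> 'n \<Rightarrow> 'n \<Rightarrow> complex) \<Rightarrow> complex^'n \<Rightarrow> 'n \<Rightarrow> 'n \<Rightarrow> 'n \<Rightarrow> complex" where
  "chern_gamma G p i j k = (\<Sum>l\<in>UNIV. wirt i (\<lambda>q. G q j l) p * Ginv G p l k)"

text \<open>Coordinate components eta_j = sum_i T^i_{ij} of the torsion 1-form, where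
  T(d_i,d_j) = sum_k (Gamma^k_{ij} - Gamma^k_{ji}) d_k (a nonzero constant multiple of the
  paper's eta, which does not affect holomorphicity).\<close>
definition torsion_form :: "(complex^'n \<Rightarrow> 'n \<Rightarrow> 'n \<Rightarrow> complex) \<Rightarrow> complex^'n \<Rightarrow> 'n \<Rightarrow> complex" where
  "torsion_form G p j = (\<Sum>i\<in>UNIV. chern_gamma G p i j i - chern_gamma G p j i i)"

text \<open>Chern curvature R^h_{i jbar k lbar} = < R(d_i, dbar_j) d_k, dbar_l >.\<close>
definition chern_curv :: "(complex^'n \<Rightarrow> 'n \<Rightarrow> 'n \<Rightarrow> complex) \<Rightarrow> complex^'n \<Rightarrow> 'n \<Rightarrow> 'n \<Rightarrow> 'n \<Rightarrow> 'n \<Rightarrow> complex" where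
  "chern_curv G p i j k l = - (\<Sum>m\<in>UNIV. wirtbar j (\<lambda>q. chern_gamma G q i k m) p * G p m l)"

definition kahler_like :: "(complex^'n) set \<Rightarrow> (complex^'n \<Rightarrow> 'n \<Rightarrow> 'n \<Rightarrow> complex) \<Rightarrow> bool" where
  "kahler_like U G \<longleftrightarrow> (\<forall>p\<in>U. \<forall>i j k l. chern_curv G p i j k l = chern_curv G p k j i l)"

definition eta_holomorphic :: "(complex^'n) set \<Rightarrow> (complex^'n \<Rightarrow> 'n \<Rightarrow> 'n \<Rightarrow> complex) \<Rightarrow> bool" where
  "eta_holomorphic U G \<longleftrightarrow> (\<forall>p\<in>U. \<forall>j k. wirtbar k (\<lambda>q. torsion_form G q j) p = 0)"

end

theory Submission
  imports Defs
begin

definition ld :: "complex^'n \<Rightarrow> (complex^'n \<Rightarrow> complex) \<Rightarrow> complex^'n \<Rightarrow> bool" where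
  "ld v f p \<longleftrightarrow> (\<lambda>t::real. f (p + t *\<^sub>R v)) differentiable (at 0)"

lemma ld_hvd: "ld v f p \<Longrightarrow> ((\<lambda>t::real. f (p + t *\<^sub>R v)) has_vector_derivative dirderiv v f p) (at 0)"
  unfolding ld_def dirderiv_def by (simp add: vector_derivative_works)

lemma ld_I: "((\<lambda>t::real. f (p + t *\<^sub>R v)) has_vector_derivative D) (at 0) \<Longrightarrow> ld v f p"
  unfolding ld_def using differentiableI_vector by blast

lemma ld_const[simp]: "ld v (\<lambda>q. c) p"
  unfolding ld_def by simp

lemma ld_add: "ld v f p \<Longrightarrow> ld v g p \<Longrightarrow> ld v (\<lambda>q. f q + g q) p"
  unfolding ld_def by simp
lemma ld_diff: "ld v f p \<Longrightarrow> ld v g p \<Longrightarrow> ld v (\<lambda>q. f q - g q) p"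
  unfolding ld_def by simp
lemma ld_mult: "ld v f p \<Longrightarrow> ld v g p \<Longrightarrow> ld v (\<lambda>q. f q * g q) p"
  unfolding ld_def by simp
lemma ld_divide: "ld v f p \<Longrightarrow> ld v g p \<Longrightarrow> g p \<noteq> 0 \<Longrightarrow> ld v (\<lambda>q. f q / g q) p"
  unfolding ld_def by (rule differentiable_divide) auto
lemma ld_sum: "finite S \<Longrightarrow> (\<And>a. a \<in> S \<Longrightarrow> ld v (f a) p) \<Longrightarrow> ld v (\<lambda>q. \<Sum>a\<in>S. f a q) p"
  unfolding ld_def by (rule differentiable_sum) auto
lemma ld_prod: assumes "\<And>a. a \<in> S \<Longrightarrow> ld v (f a) p" shows "ld v (\<lambda>q. \<Prod>a\<in>S. f a q) p"
proof -
  have "\<forall>a\<in>S. \<exists>D. ((\<lambda>t::real. f a (p + t *\<^sub>R v)) has_derivative D) (at 0)"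
    using assms unfolding ld_def differentiable_def by blast
  from bchoice[OF this] obtain D where "\<forall>a\<in>S. ((\<lambda>t::real. f a (p + t *\<^sub>R v)) has_derivative D a) (at 0)"
    by blast
  then show ?thesis unfolding ld_def differentiable_def
    using has_derivative_prod[where I=S and f="\<lambda>a t. f a (p + t *\<^sub>R v)" and f'=D and x=0 and S=UNIV] by blast
qed

lemma dd_diff: "ld v f p \<Longrightarrow> ld v g p \<Longrightarrow> dirderiv v (\<lambda>q. f q - g q) p = dirderiv v f p - dirderiv v g p"
  unfolding dirderiv_def
  by (rule vector_derivative_at, rule has_vector_derivative_diff; drule ld_hvd; simp add: dirderiv_def)

lemma dd_sum: "finite S \<Longrightarrow> (\<And>a. a \<in> S \<Longrightarrow> ld v (f a) p) \<Longrightarrow>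
   dirderiv v (\<lambda>q. \<Sum>a\<in>S. f a q) p = (\<Sum>a\<in>S. dirderiv v (f a) p)"
proof -
  assume "finite S" "\<And>a. a \<in> S \<Longrightarrow> ld v (f a) p"
  then have "((\<lambda>t::real. \<Sum>a\<in>S. f a (p + t *\<^sub>R v)) has_vector_derivative (\<Sum>a\<in>S. dirderiv v (f a) p)) (at 0)"
    by (intro has_vector_derivative_sum ld_hvd)
  then show ?thesis unfolding dirderiv_def by (rule vector_derivative_at)
qed

lemma dd_const: "dirderiv v (\<lambda>q. c) p = 0"
  unfolding dirderiv_def by (simp add: vector_derivative_const_at)


lemma G_ld:
  assumes "hermitian_metric U G" "p \<in> U" "v \<in> coord_dirs"
  shows "ld v (\<lambda>q. G q a b) p"
proof -
  have "smooth_on U (\<lambda>q. G q a b)" using assms(1) unfolding hermitian_metric_def by blast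
  then have "((\<lambda>t::real. iter_dir [] (\<lambda>q. G q a b) (p + t *\<^sub>R v)) has_vector_derivative
       iter_dir [v] (\<lambda>q. G q a b) p) (at 0)"
    unfolding smooth_on_def using assms(2,3) by (metis empty_subsetI list.set(1))
  then show ?thesis by (intro ld_I) simp
qed

lemma dG_ld:
  assumes "hermitian_metric U G" "p \<in> U" "v \<in> coord_dirs" "u \<in> coord_dirs"
  shows "ld v (dirderiv u (\<lambda>q. G q a b)) p"
proof -
  have "smooth_on U (\<lambda>q. G q a b)" using assms(1) unfolding hermitian_metric_def by blast
  moreover have "set [u] \<subseteq> coord_dirs" using assms(4) by simp
  ultimately have "((\<lambda>t::real. iter_dir [u] (\<lambda>q. G q a b) (p + t *\<^sub>R v)) has_vector_derivative
       iter_dir [v,u] (\<lambda>q. G q a b) p) (at 0)"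
    unfolding smooth_on_def using assms(2,3) by blast
  then show ?thesis by (intro ld_I) simp
qed

lemma axis_dirs: "axis i 1 \<in> coord_dirs" "axis i \<i> \<in> coord_dirs"
  unfolding coord_dirs_def by auto

lemma wirt_ld:
  assumes "hermitian_metric U G" "p \<in> U" "v \<in> coord_dirs"
  shows "ld v (wirt i (\<lambda>q. G q a b)) p"
proof -
  have "ld v (\<lambda>q. (dirderiv (axis i 1) (\<lambda>q. G q a b) q - \<i> * dirderiv (axis i \<i>) (\<lambda>q. G q a b) q) / 2) p"
    by (intro ld_divide ld_diff ld_mult ld_const dG_ld[OF assms] axis_dirs) auto
  then show ?thesis unfolding wirt_def[abs_def] by simp
qed

lemma pos_lemma:
  fixes G :: "complex^'n \<Rightarrow> 'n \<Rightarrow> 'n \<Rightarrow> complex"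
  assumes "hermitian_metric U G" "p \<in> U" "\<And>l. (\<Sum>m\<in>UNIV. c m * G p m l) = 0"
  shows "c m = 0"
proof (rule ccontr)
  assume "c m \<noteq> 0"
  define \<xi> :: "complex^'n" where "\<xi> = (\<chi> i. c i)"
  have "\<xi> \<noteq> 0" using \<open>c m \<noteq> 0\<close> unfolding \<xi>_def by (metis vec_lambda_beta zero_index)
  then have "Re (\<Sum>i\<in>UNIV. \<Sum>j\<in>UNIV. G p i j * \<xi> $ i * cnj (\<xi> $ j)) > 0"
    using assms(1,2) unfolding hermitian_metric_def by blast
  moreover have "(\<Sum>i\<in>UNIV. \<Sum>j\<in>UNIV. G p i j * \<xi> $ i * cnj (\<xi> $ j))
      = (\<Sum>j\<in>UNIV. (\<Sum>i\<in>UNIV. c i * G p i j) * cnj (c j))"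
    unfolding \<xi>_def by (subst sum.swap) (simp add: sum_distrib_right sum_distrib_left mult_ac)
  ultimately show False using assms(3) by simp
qed

lemma det_nz:
  assumes "hermitian_metric U G" "p \<in> U"
  shows "det (\<chi> a b. G p a b) \<noteq> 0"
proof -
  have "\<forall>c. (\<Sum>i\<in>UNIV. c i *s row i (\<chi> a b. G p a b)) = 0 \<longrightarrow> (\<forall>i. c i = 0)"
  proof (intro allI impI)
    fix c :: "'a \<Rightarrow> complex" and i
    assume h: "(\<Sum>i\<in>UNIV. c i *s row i (\<chi> a b. G p a b)) = 0"
    have "\<And>l. (\<Sum>m\<in>UNIV. c m * G p m l) = 0"
    proof -
      fix l
      have "(\<Sum>i\<in>UNIV. c i *s row i (\<chi> a b. G p a b)) $ l = 0" using h by simp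
      then show "(\<Sum>m\<in>UNIV. c m * G p m l) = 0" by (simp add: sum_component row_def)
    qed
    then show "c i = 0" using pos_lemma[OF assms] by blast
  qed
  then have "invertible (\<chi> a b. G p a b)"
    unfolding invertible_right_inverse matrix_right_invertible_independent_rows by blast
  then show ?thesis using invertible_det_nz by blast
qed


lemma ld_if: "ld v f p \<Longrightarrow> ld v g p \<Longrightarrow> ld v (\<lambda>q. if c then f q else g q) p"
  by (cases c) auto

lemma ld_det:
  assumes "\<And>i j. ld v (\<lambda>q. M q $ i $ j) p"
  shows "ld v (\<lambda>q. det (M q)) p"
  unfolding det_def
  by (intro ld_sum ld_mult ld_const ld_prod assms) auto

lemma Ginv_formula:
  fixes G :: "complex^'n \<Rightarrow> 'n \<Rightarrow> 'n \<Rightarrow> complex"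
  assumes "hermitian_metric U G" "p \<in> U"
  shows "Ginv G p l k = det (\<chi> i j. if j = l then (if i = k then 1 else 0) else G p i j) / det (\<chi> a b. G p a b)"
proof -
  let ?A = "(\<chi> a b. G p a b) :: complex^'n^'n"
  have d: "det ?A \<noteq> 0" using det_nz[OF assms] .
  then have "invertible ?A" using invertible_det_nz by blast
  then have "?A ** matrix_inv ?A = mat 1"
    unfolding invertible_def matrix_inv_def by (rule someI_ex[THEN conjunct1])
  define x :: "complex^'n" where "x = (\<chi> l. matrix_inv ?A $ l $ k)"
  define b :: "complex^'n" where "b = (\<chi> i. if i = k then 1 else 0)"
  have "?A *v x = b"
  proof -
    have "(?A *v x) $ i = b $ i" for i
    proof -
      have "(?A ** matrix_inv ?A) $ i $ k = mat 1 $ i $ k" using \<open>?A ** matrix_inv ?A = mat 1\<close> by simp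
      then show ?thesis
        unfolding x_def b_def by (simp add: matrix_vector_mult_def matrix_matrix_mult_def mat_def)
    qed
    then show ?thesis by (simp add: vec_eq_iff)
  qed
  then have "x = (\<chi> k. det(\<chi> i j. if j=k then b$i else ?A$i$j) / det ?A)"
    using cramer[OF d] by blast
  then have xl: "x $ l = det(\<chi> i j. if j=l then b$i else ?A$i$j) / det ?A" by (rule arg_cong[where f="\<lambda>y. y $ l", THEN trans]) (simp only: vec_lambda_beta)
  have eqm: "(\<chi> i j. if j=l then b$i else ?A$i$j) = ((\<chi> i j. if j = l then (if i = k then 1 else 0) else G p i j) :: complex^'n^'n)"
    by (simp add: vec_eq_iff b_def)
  have "Ginv G p l k = x $ l" unfolding Ginv_def x_def by (simp only: vec_lambda_beta)
  also have "\<dots> = det(\<chi> i j. if j=l then b$i else ?A$i$j) / det ?A" by (rule xl)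
  also have "\<dots> = det ((\<chi> i j. if j = l then (if i = k then 1 else 0) else G p i j) :: complex^'n^'n) / det ?A"
    by (simp only: eqm)
  finally show ?thesis .
qed

lemma Ginv_ld:
  fixes G :: "complex^'n \<Rightarrow> 'n \<Rightarrow> 'n \<Rightarrow> complex"
  assumes "hermitian_metric U G" "open U" "p \<in> U" "v \<in> coord_dirs"
  shows "ld v (\<lambda>q. Ginv G q l k) p"
proof -
  define C where "C = (\<lambda>q. det ((\<chi> i j. if j = l then (if i = k then 1 else 0) else G q i j) :: complex^'n^'n)
     / det ((\<chi> a b. G q a b) :: complex^'n^'n))"
  have e: "\<And>i j q. ld v (\<lambda>q. G q i j) p" using G_ld[OF assms(1,3,4)] by blast
  have e2: "\<And>i j c1. ld v (\<lambda>q. if j = l then c1 else G q i j) p" by (rule ld_if) (auto simp: e)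
  have "ld v C p" unfolding C_def
    by (intro ld_divide ld_det det_nz[OF assms(1,3)]) (auto simp: e e2)
  then have h: "((\<lambda>t::real. C (p + t *\<^sub>R v)) has_vector_derivative dirderiv v C p) (at 0)"
    by (rule ld_hvd)
  define S where "S = (\<lambda>t::real. p + t *\<^sub>R v) -` U"
  have "open S" unfolding S_def
    by (rule continuous_open_vimage[OF assms(2)]) (intro continuous_intros)
  moreover have "0 \<in> S" unfolding S_def using assms(3) by simp
  moreover have "\<And>t. t \<in> S \<Longrightarrow> C (p + t *\<^sub>R v) = Ginv G (p + t *\<^sub>R v) l k"
    unfolding S_def C_def using Ginv_formula[OF assms(1), symmetric] by blast
  ultimately have "((\<lambda>t::real. Ginv G (p + t *\<^sub>R v) l k) has_vector_derivative dirderiv v C p) (at 0)"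
    by (rule has_vector_derivative_transform_within_open[OF h])
  then show ?thesis by (rule ld_I)
qed

lemma gamma_ld:
  fixes G :: "complex^'n \<Rightarrow> 'n \<Rightarrow> 'n \<Rightarrow> complex"
  assumes "hermitian_metric U G" "open U" "p \<in> U" "v \<in> coord_dirs"
  shows "ld v (\<lambda>q. chern_gamma G q i j k) p"
  unfolding chern_gamma_def
  by (intro ld_sum ld_mult wirt_ld[OF assms(1,3,4)] Ginv_ld[OF assms]) auto


lemma wb_diff:
  assumes "ld (axis j 1) f p" "ld (axis j \<i>) f p" "ld (axis j 1) g p" "ld (axis j \<i>) g p"
  shows "wirtbar j (\<lambda>q. f q - g q) p = wirtbar j f p - wirtbar j g p"
  unfolding wirtbar_def using assms by (simp add: dd_diff field_simps)

lemma wb_sum: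
  assumes "finite S" "\<And>a. a \<in> S \<Longrightarrow> ld (axis j 1) (f a) p" "\<And>a. a \<in> S \<Longrightarrow> ld (axis j \<i>) (f a) p"
  shows "wirtbar j (\<lambda>q. \<Sum>a\<in>S. f a q) p = (\<Sum>a\<in>S. wirtbar j (f a) p)"
  unfolding wirtbar_def using assms
  by (simp add: dd_sum sum_distrib_left sum.distrib add_divide_distrib sum_divide_distrib)

lemma gamma_ld2:
  fixes G :: "complex^'n \<Rightarrow> 'n \<Rightarrow> 'n \<Rightarrow> complex"
  assumes "hermitian_metric U G" "open U" "p \<in> U"
  shows "ld (axis j 1) (\<lambda>q. chern_gamma G q a b c) p" "ld (axis j \<i>) (\<lambda>q. chern_gamma G q a b c) p"
  using gamma_ld[OF assms axis_dirs(1)] gamma_ld[OF assms axis_dirs(2)] by auto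

lemma T_ld:
  fixes G :: "complex^'n \<Rightarrow> 'n \<Rightarrow> 'n \<Rightarrow> complex"
  assumes "hermitian_metric U G" "open U" "p \<in> U"
  shows "ld (axis j 1) (\<lambda>q. chern_gamma G q a b c - chern_gamma G q b a c) p"
        "ld (axis j \<i>) (\<lambda>q. chern_gamma G q a b c - chern_gamma G q b a c) p"
  using gamma_ld2[OF assms] by (auto intro: ld_diff)

lemma eta_ld:
  fixes G :: "complex^'n \<Rightarrow> 'n \<Rightarrow> 'n \<Rightarrow> complex"
  assumes "hermitian_metric U G" "open U" "p \<in> U"
  shows "ld (axis j 1) (\<lambda>q. torsion_form G q a) p" "ld (axis j \<i>) (\<lambda>q. torsion_form G q a) p"
  unfolding torsion_form_def using T_ld[OF assms] by (auto intro: ld_sum)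

lemma wb_const: "wirtbar j (\<lambda>q. c) p = 0"
  unfolding wirtbar_def by (simp add: dd_const)

theorem lemma6:
  fixes U :: "(complex^'n) set"
    and G :: "complex^'n \<Rightarrow> 'n \<Rightarrow> 'n \<Rightarrow> complex"
  assumes "open U"
    and "hermitian_metric U G"
  shows "(kahler_like U G \<longrightarrow> eta_holomorphic U G) \<and>
         (CARD('n) = 2 \<and> eta_holomorphic U G \<longrightarrow> kahler_like U G)"
proof (intro conjI impI)
  assume K: "kahler_like U G"
  show "eta_holomorphic U G"
    unfolding eta_holomorphic_def
  proof (intro ballI allI)
    fix p j k assume p: "p \<in> U"
    have T: "wirtbar j' (\<lambda>q. chern_gamma G q i k' m) p = wirtbar j' (\<lambda>q. chern_gamma G q k' i m) p"
      for i j' k' m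
    proof -
      have "\<And>l. (\<Sum>m\<in>UNIV. (wirtbar j' (\<lambda>q. chern_gamma G q i k' m) p - wirtbar j' (\<lambda>q. chern_gamma G q k' i m) p) * G p m l) = 0"
      proof -
        fix l
        have "chern_curv G p i j' k' l = chern_curv G p k' j' i l" using K p unfolding kahler_like_def by blast
        then show "(\<Sum>m\<in>UNIV. (wirtbar j' (\<lambda>q. chern_gamma G q i k' m) p - wirtbar j' (\<lambda>q. chern_gamma G q k' i m) p) * G p m l) = 0"
          unfolding chern_curv_def by (simp add: left_diff_distrib sum_subtractf)
      qed
      from pos_lemma[OF assms(2) p this] show ?thesis by simp
    qed
    have "wirtbar k (\<lambda>q. torsion_form G q j) p
        = (\<Sum>i\<in>UNIV. wirtbar k (\<lambda>q. chern_gamma G q i j i - chern_gamma G q j i i) p)"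
      unfolding torsion_form_def by (rule wb_sum) (auto intro: T_ld[OF assms(2,1) p])
    also have "\<dots> = (\<Sum>i\<in>UNIV. wirtbar k (\<lambda>q. chern_gamma G q i j i) p - wirtbar k (\<lambda>q. chern_gamma G q j i i) p)"
      by (intro sum.cong refl wb_diff gamma_ld2[OF assms(2,1) p])
    also have "\<dots> = 0" by (simp add: T)
    finally show "wirtbar k (\<lambda>q. torsion_form G q j) p = 0" .
  qed
next
  assume H: "CARD('n) = 2 \<and> eta_holomorphic U G"
  show "kahler_like U G"
    unfolding kahler_like_def
  proof (intro ballI allI)
    fix p i j k l assume p: "p \<in> U"
    have W: "wirtbar j (\<lambda>q. chern_gamma G q i k m) p = wirtbar j (\<lambda>q. chern_gamma G q k i m) p" for m
    proof (cases "i = k")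
      case True then show ?thesis by simp
    next
      case False
      obtain x y :: 'n where xy: "UNIV = {x, y}" "x \<noteq> y" using H card_2_iff by metis
      have U2: "UNIV = {i, k}" using xy False by (metis UNIV_I insertE insert_commute singletonD)
      have E: "\<And>a. wirtbar j (\<lambda>q. torsion_form G q a) p = 0"
        using H p unfolding eta_holomorphic_def by blast
      have "wirtbar j (\<lambda>q. chern_gamma G q i k m - chern_gamma G q k i m) p = 0"
      proof -
        have "m \<in> {i, k}" using U2 by blast
        then consider "m = i" | "m = k" by blast
        then show ?thesis
        proof cases
          case 1
          have "(\<lambda>q. chern_gamma G q i k m - chern_gamma G q k i m) = (\<lambda>q. torsion_form G q k)"
            unfolding torsion_form_def U2 using False 1 by (simp add: fun_eq_iff)
          then show ?thesis using E by simp
        next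
          case 2
          have "(\<lambda>q. chern_gamma G q i k m - chern_gamma G q k i m) = (\<lambda>q. 0 - torsion_form G q i)"
            unfolding torsion_form_def U2 using False 2 by (simp add: fun_eq_iff)
          moreover have "wirtbar j (\<lambda>q. 0 - torsion_form G q i) p = wirtbar j (\<lambda>q. 0) p - wirtbar j (\<lambda>q. torsion_form G q i) p"
            by (rule wb_diff[OF ld_const ld_const eta_ld[OF assms(2,1) p]])
          ultimately show ?thesis using E wb_const by simp
        qed
      qed
      then show ?thesis by (simp add: wb_diff[OF gamma_ld2[OF assms(2,1) p] gamma_ld2[OF assms(2,1) p]])
    qed
    show "chern_curv G p i j k l = chern_curv G p k j i l"
      unfolding chern_curv_def by (simp add: W)
  qed
qed

end
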